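(* Let $n\ge1$, $\epsilon\in[0,1/2]$, $m\in\{j/2^n:0\le j\le 2^n\}$, and let $\Phi:[0,1]\to\mathbb{R}$ be convex. Then there exists a monotone Boolean function $f:\{0,1\}^n\to\{0,1\}$ with $\mathbb{E} f=m$ such that $\mathbb{E}\Phi(T_\epsilon f)\ge\mathbb{E}\Phi(T_\epsilon g)$ for every Boolean function $g:\{0,1\}^n\to\{0,1\}$ with $\mathbb{E} g=m$.
   Context: $\{0,1\}^n$ carries the uniform measure and $\mathbb{E}$ is expectation under it. The noise operator is $T_\epsilon f(x)=\mathbb{E} f(x+Z)$, where $Z$ has independent Bernoulli($\epsilon$) coordinates and addition is mod 2. A function $f$ is monotone if $f(x)\le f(y)$ whenever $x_i\le y_i$ for all $i\in[n]$. *)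

theory Defs
  imports "HOL-Analysis.Analysis"
begin

definition cube :: "nat \<Rightarrow> (nat \<Rightarrow> bool) set" where
  "cube n = {x. \<forall>i\<ge>n. \<not> x i}"

definition cexp :: "nat \<Rightarrow> ((nat \<Rightarrow> bool) \<Rightarrow> real) \<Rightarrow> real" where
  "cexp n f = (\<Sum>x\<in>cube n. f x) / 2 ^ n"

definition xadd :: "(nat \<Rightarrow> bool) \<Rightarrow> (nat \<Rightarrow> bool) \<Rightarrow> (nat \<Rightarrow> bool)" where
  "xadd x z = (\<lambda>i. x i \<noteq> z i)"

definition bern :: "nat \<Rightarrow> real \<Rightarrow> (nat \<Rightarrow> bool) \<Rightarrow> real" where
  "bern n eps z = (\<Prod>i<n. if z i then eps else 1 - eps)"

definition noise :: "nat \<Rightarrow> real \<Rightarrow> ((nat \<Rightarrow> bool) \<Rightarrow> real) \<Rightarrow> (nat \<Rightarrow> bool) \<Rightarrow> real" where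
  "noise n eps f x = (\<Sum>z\<in>cube n. bern n eps z * f (xadd x z))"

definition boolean_fun :: "nat \<Rightarrow> ((nat \<Rightarrow> bool) \<Rightarrow> real) \<Rightarrow> bool" where
  "boolean_fun n f \<longleftrightarrow> (\<forall>x\<in>cube n. f x = 0 \<or> f x = 1)"

definition monotone_fun :: "nat \<Rightarrow> ((nat \<Rightarrow> bool) \<Rightarrow> real) \<Rightarrow> bool" where
  "monotone_fun n f \<longleftrightarrow>
     (\<forall>x\<in>cube n. \<forall>y\<in>cube n. (\<forall>i<n. x i \<longrightarrow> y i) \<longrightarrow> f x \<le> f y)"

end

theory Submission imports Defs begin

definition flip :: "nat \<Rightarrow> (nat\<Rightarrow>bool) \<Rightarrow> (nat\<Rightarrow>bool)" where
  "flip i x = x(i := \<not> x i)"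

lemma flip_flip[simp]: "flip i (flip i x) = x" by (auto simp: flip_def)
lemma flip_same[simp]: "flip i x i = (\<not> x i)" by (simp add: flip_def)
lemma flip_other: "j \<noteq> i \<Longrightarrow> flip i x j = x j" by (simp add: flip_def)
lemma flip_cube: "i < n \<Longrightarrow> x \<in> cube n \<Longrightarrow> flip i x \<in> cube n" by (auto simp: cube_def flip_def)
lemma xadd_cube: "x \<in> cube n \<Longrightarrow> z \<in> cube n \<Longrightarrow> xadd x z \<in> cube n" by (auto simp: cube_def xadd_def)
lemma xadd_flip: "xadd y (flip i z) = xadd (flip i y) z" by (auto simp: xadd_def flip_def fun_eq_iff)
lemma flip_xadd: "flip i (xadd x z) = xadd (flip i x) z" by (auto simp: xadd_def flip_def fun_eq_iff)
lemma xadd_i[simp]: "xadd x z i = (x i \<noteq> z i)" by (simp add: xadd_def)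

lemma cube_eq: "cube n = (\<lambda>S i. i \<in> S) ` Pow {..<n}"
proof
  show "cube n \<subseteq> (\<lambda>S i. i \<in> S) ` Pow {..<n}"
  proof
    fix x assume "x \<in> cube n"
    then have "x = (\<lambda>i. i \<in> {i. i<n \<and> x i})" unfolding cube_def by (auto simp: fun_eq_iff) (meson leI)
    then show "x \<in> (\<lambda>S i. i \<in> S) ` Pow {..<n}" by (rule image_eqI) auto
  qed
  show "(\<lambda>S i. i \<in> S) ` Pow {..<n} \<subseteq> cube n" by (auto simp: cube_def)
qed

lemma finite_cube[simp]: "finite (cube n)" by (simp add: cube_eq)

lemma card_cube: "card (cube n) = 2^n"
proof -
  have "inj_on (\<lambda>S i. i \<in> S) (Pow {..<n})" by (auto simp: inj_on_def fun_eq_iff)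
  then show ?thesis by (simp add: cube_eq card_image card_Pow)
qed

lemma cube_Suc: "cube (Suc n) = cube n \<union> (\<lambda>z. z(n:=True)) ` cube n"
proof (intro equalityI subsetI)
  fix x assume x: "x \<in> cube (Suc n)"
  show "x \<in> cube n \<union> (\<lambda>z. z(n:=True)) ` cube n"
  proof (cases "x n")
    case True
    then have "x = (x(n:=False))(n:=True)" by (simp add: fun_eq_iff)
    moreover have "x(n:=False) \<in> cube n" using x by (auto simp: cube_def)
    ultimately show ?thesis by blast
  next
    case False then show ?thesis using x by (auto simp: cube_def) (metis le_antisym not_less_eq_eq)
  qed
next
  fix x assume "x \<in> cube n \<union> (\<lambda>z. z(n:=True)) ` cube n" then show "x \<in> cube (Suc n)" by (auto simp: cube_def)
qed

lemma sum_prod_cube: fixes h :: "nat \<Rightarrow> bool \<Rightarrow> real" shows "(\<Sum>z\<in>cube n. \<Prod>i<n. h i (z i)) = (\<Prod>i<n. h i True + h i False)"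
proof (induction n)
  case 0
  have "cube 0 = {\<lambda>_. False}" by (auto simp: cube_def)
  then show ?case by simp
next
  case (Suc n)
  have inj: "inj_on (\<lambda>z. z(n:=True)) (cube n)"
    unfolding inj_on_def cube_def by (auto simp: fun_eq_iff)
  have dis: "cube n \<inter> (\<lambda>z. z(n:=True)) ` cube n = {}" by (auto simp: cube_def)
  have "(\<Sum>z\<in>cube (Suc n). \<Prod>i<Suc n. h i (z i)) =
      (\<Sum>z\<in>cube n. \<Prod>i<Suc n. h i (z i)) + (\<Sum>z\<in>(\<lambda>z. z(n:=True)) ` cube n. \<Prod>i<Suc n. h i (z i))"
    unfolding cube_Suc by (rule sum.union_disjoint) (use dis in auto)
  also have "(\<Sum>z\<in>cube n. \<Prod>i<Suc n. h i (z i)) = (\<Sum>z\<in>cube n. (\<Prod>i<n. h i (z i)) * h n False)"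
    by (rule sum.cong) (auto simp: cube_def)
  also have "(\<Sum>z\<in>(\<lambda>z. z(n:=True)) ` cube n. \<Prod>i<Suc n. h i (z i)) = (\<Sum>z\<in>cube n. (\<Prod>i<n. h i (z i)) * h n True)"
    by (simp add: sum.reindex[OF inj])
  also have "(\<Sum>z\<in>cube n. (\<Prod>i<n. h i (z i)) * h n False) + (\<Sum>z\<in>cube n. (\<Prod>i<n. h i (z i)) * h n True)
     = (\<Sum>z\<in>cube n. \<Prod>i<n. h i (z i)) * h n False + (\<Sum>z\<in>cube n. \<Prod>i<n. h i (z i)) * h n True"
    by (simp add: sum_distrib_right)
  finally show ?case using Suc by (simp add: algebra_simps)
qed

lemma sum_bern: "(\<Sum>z\<in>cube n. bern n e z) = 1"
  unfolding bern_def using sum_prod_cube[where n=n and h="\<lambda>i b. if b then e else 1 - e"] by simp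

lemma bern_nonneg: "0 \<le> e \<Longrightarrow> e \<le> 1 \<Longrightarrow> 0 \<le> bern n e z"
  unfolding bern_def by (rule prod_nonneg) auto

lemma sum_flip: "i < n \<Longrightarrow> (\<Sum>x\<in>cube n. h x) = (\<Sum>x\<in>cube n. h (flip i x))"
  by (rule sum.reindex_bij_witness[where i="flip i" and j="flip i"]) (auto simp: flip_cube)

definition bern' :: "nat \<Rightarrow> real \<Rightarrow> nat \<Rightarrow> (nat \<Rightarrow> bool) \<Rightarrow> real" where
  "bern' n e i z = (\<Prod>j\<in>{..<n}-{i}. if z j then e else 1 - e)"

lemma bern_split: "i < n \<Longrightarrow> bern n e z = (if z i then e else 1 - e) * bern' n e i z"
  unfolding bern_def bern'_def by (rule prod.remove) auto

lemma bern'_flip: "bern' n e i (flip i z) = bern' n e i z"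
  unfolding bern'_def by (rule prod.cong) (auto simp: flip_other)

lemma bern'_nonneg: "0 \<le> e \<Longrightarrow> e \<le> 1 \<Longrightarrow> 0 \<le> bern' n e i z"
  unfolding bern'_def by (rule prod_nonneg) auto

definition AA :: "nat \<Rightarrow> real \<Rightarrow> nat \<Rightarrow> ((nat \<Rightarrow> bool) \<Rightarrow> real) \<Rightarrow> (nat \<Rightarrow> bool) \<Rightarrow> real" where
  "AA n e i g y = (\<Sum>z\<in>cube n. if z i then 0 else bern' n e i z * g (xadd y z))"

lemma noise_split:
  assumes "i < n"
  shows "noise n e g y = (1 - e) * AA n e i g y + e * AA n e i g (flip i y)"
proof -
  have "noise n e g y = (\<Sum>z\<in>cube n. (if z i then e * bern' n e i z * g (xadd y z) else 0)
        + (if z i then 0 else (1 - e) * (bern' n e i z * g (xadd y z))))"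
    unfolding noise_def by (rule sum.cong) (auto simp: bern_split[OF assms])
  also have "\<dots> = (\<Sum>z\<in>cube n. (if z i then e * bern' n e i z * g (xadd y z) else 0))
        + (\<Sum>z\<in>cube n. (if z i then 0 else (1 - e) * (bern' n e i z * g (xadd y z))))"
    by (rule sum.distrib)
  also have "(\<Sum>z\<in>cube n. (if z i then 0 else (1 - e) * (bern' n e i z * g (xadd y z)))) = (1 - e) * AA n e i g y"
    unfolding AA_def sum_distrib_left by (rule sum.cong) auto
  also have "(\<Sum>z\<in>cube n. (if z i then e * bern' n e i z * g (xadd y z) else 0))
     = (\<Sum>z\<in>cube n. (if flip i z i then e * bern' n e i (flip i z) * g (xadd y (flip i z)) else 0))"
    using sum_flip[OF assms] .
  also have "\<dots> = e * AA n e i g (flip i y)"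
    unfolding AA_def sum_distrib_left by (rule sum.cong) (auto simp: bern'_flip xadd_flip)
  finally show ?thesis by simp
qed

definition cmpr :: "nat \<Rightarrow> ((nat \<Rightarrow> bool) \<Rightarrow> real) \<Rightarrow> (nat \<Rightarrow> bool) \<Rightarrow> real" where
  "cmpr i g x = (if x i then max (g x) (g (flip i x)) else min (g x) (g (flip i x)))"

lemma cmpr_pair: "cmpr i g w + cmpr i g (flip i w) = g w + g (flip i w)"
  unfolding cmpr_def by auto

lemma AA_comp_le:
  assumes "\<not> x i" "0 \<le> e" "e \<le> 1"
  shows "AA n e i (cmpr i g) x \<le> AA n e i g x" "AA n e i (cmpr i g) x \<le> AA n e i g (flip i x)"
proof -
  show "AA n e i (cmpr i g) x \<le> AA n e i g x"
    unfolding AA_def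
    by (rule sum_mono) (auto simp: cmpr_def assms intro!: mult_left_mono bern'_nonneg)
  show "AA n e i (cmpr i g) x \<le> AA n e i g (flip i x)"
    unfolding AA_def
    by (rule sum_mono) (auto simp: cmpr_def assms flip_xadd intro!: mult_left_mono bern'_nonneg)
qed

lemma AA_comp_sum:
  "AA n e i (cmpr i g) x + AA n e i (cmpr i g) (flip i x) = AA n e i g x + AA n e i g (flip i x)"
proof -
  have "AA n e i (cmpr i g) x + AA n e i (cmpr i g) (flip i x) =
     (\<Sum>z\<in>cube n. if z i then 0 else bern' n e i z * (cmpr i g (xadd x z) + cmpr i g (flip i (xadd x z))))"
    unfolding AA_def by (simp add: sum.distrib[symmetric] flip_xadd distrib_left if_distrib cong: if_cong)
  also have "\<dots> = (\<Sum>z\<in>cube n. if z i then 0 else bern' n e i z * (g (xadd x z) + g (flip i (xadd x z))))"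
    by (rule sum.cong) (simp_all add: cmpr_pair)
  also have "\<dots> = AA n e i g x + AA n e i g (flip i x)"
    unfolding AA_def by (simp add: sum.distrib[symmetric] flip_xadd distrib_left if_distrib cong: if_cong)
  finally show ?thesis .
qed

lemma conv_pair:
  fixes \<Phi> :: "real \<Rightarrow> real"
  assumes cv: "convex_on {0..1} \<Phi>" and e: "0 \<le> e" "e \<le> 1/2"
    and up: "u \<le> p" and uq: "u \<le> q" and s: "u + v = p + q"
    and r: "(1 - e) * u + e * v \<in> {0..1}" "(1 - e) * v + e * u \<in> {0..1}"
  shows "\<Phi> ((1 - e) * p + e * q) + \<Phi> ((1 - e) * q + e * p) \<le> \<Phi> ((1 - e) * u + e * v) + \<Phi> ((1 - e) * v + e * u)"
proof -
  define P1 P2 Q1 Q2 where "P1 = (1 - e) * u + e * v" "P2 = (1 - e) * v + e * u" "Q1 = (1 - e) * p + e * q" "Q2 = (1 - e) * q + e * p"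
  have v: "v = p + q - u" using s by simp
  have "Q1 - P1 = (1-2*e)*(p-u)" "P2 - Q1 = (1-2*e)*(q-u)" "Q2 - P1 = (1-2*e)*(q-u)" "P2 - Q2 = (1-2*e)*(p-u)"
    unfolding P1_P2_Q1_Q2_def v by (simp_all add: algebra_simps)
  moreover have "0 \<le> (1-2*e)*(p-u)" "0 \<le> (1-2*e)*(q-u)" using e up uq by simp_all
  ultimately have o: "P1 \<le> Q1" "Q1 \<le> P2" "P1 \<le> Q2" "Q2 \<le> P2" by linarith+
  have sQ: "Q1 + Q2 = P1 + P2" unfolding P1_P2_Q1_Q2_def v by (simp add: algebra_simps)
  have P1r: "P1 \<in> {0..1}" "P2 \<in> {0..1}" using r unfolding P1_P2_Q1_Q2_def by auto
  show ?thesis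
  proof (cases "P1 = P2")
    case True
    then have "Q1 = P1" "Q2 = P1" using o by linarith+
    then show ?thesis using True unfolding P1_P2_Q1_Q2_def by simp
  next
    case False
    then have lt: "P1 < P2" using o by linarith
    define t where "t = (Q1 - P1) / (P2 - P1)"
    have t01: "0 \<le> t" "t \<le> 1" using o lt unfolding t_def by (auto simp: divide_simps)
    have "t * (P2 - P1) = Q1 - P1" using lt unfolding t_def by simp
    then have q1: "Q1 = (1 - t) * P1 + t * P2" by (simp add: algebra_simps)
    have q2: "Q2 = (1 - (1 - t)) * P1 + (1 - t) * P2" using q1 sQ by (simp add: algebra_simps)
    have "\<Phi> Q1 \<le> (1 - t) * \<Phi> P1 + t * \<Phi> P2"
      using convex_onD[OF cv t01 P1r] q1 by simp
    moreover have "\<Phi> Q2 \<le> (1 - (1 - t)) * \<Phi> P1 + (1 - t) * \<Phi> P2"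
      using convex_onD[OF cv _ _ P1r, of "1 - t"] t01 q2 by simp
    ultimately have "\<Phi> Q1 + \<Phi> Q2 \<le> \<Phi> P1 + \<Phi> P2" by (simp add: algebra_simps)
    then show ?thesis unfolding P1_P2_Q1_Q2_def .
  qed
qed


lemma noise_bounds:
  assumes "0 \<le> e" "e \<le> 1" "\<forall>x\<in>cube n. 0 \<le> g x \<and> g x \<le> 1" "y \<in> cube n"
  shows "0 \<le> noise n e g y" "noise n e g y \<le> 1"
proof -
  show "0 \<le> noise n e g y" unfolding noise_def
    using assms by (intro sum_nonneg mult_nonneg_nonneg bern_nonneg) (auto simp: xadd_cube)
  have "noise n e g y \<le> (\<Sum>z\<in>cube n. bern n e z)" unfolding noise_def
    using assms by (intro sum_mono mult_left_le bern_nonneg) (auto simp: xadd_cube)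
  then show "noise n e g y \<le> 1" by (simp add: sum_bern)
qed

lemma cmpr_bounds:
  assumes "i < n" "\<forall>x\<in>cube n. 0 \<le> g x \<and> g x \<le> 1"
  shows "\<forall>x\<in>cube n. 0 \<le> cmpr i g x \<and> cmpr i g x \<le> 1"
  using assms flip_cube[OF assms(1)] unfolding cmpr_def by auto

lemma pointwise:
  fixes \<Phi> :: "real \<Rightarrow> real"
  assumes i: "i < n" and cv: "convex_on {0..1} \<Phi>" and e: "0 \<le> e" "e \<le> 1/2"
    and g: "\<forall>x\<in>cube n. 0 \<le> g x \<and> g x \<le> 1" and x: "x \<in> cube n" "\<not> x i"
  shows "\<Phi> (noise n e g x) + \<Phi> (noise n e g (flip i x))
     \<le> \<Phi> (noise n e (cmpr i g) x) + \<Phi> (noise n e (cmpr i g) (flip i x))"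
proof -
  define u v p q where "u = AA n e i (cmpr i g) x" "v = AA n e i (cmpr i g) (flip i x)"
    "p = AA n e i g x" "q = AA n e i g (flip i x)"
  have n1: "noise n e g x = (1 - e) * p + e * q" "noise n e g (flip i x) = (1 - e) * q + e * p"
    "noise n e (cmpr i g) x = (1 - e) * u + e * v" "noise n e (cmpr i g) (flip i x) = (1 - e) * v + e * u"
    unfolding u_v_p_q_def using noise_split[OF i] by (metis flip_flip)+
  have e1: "e \<le> 1" using e by simp
  have cg: "\<forall>x\<in>cube n. 0 \<le> cmpr i g x \<and> cmpr i g x \<le> 1" by (rule cmpr_bounds[OF i g])
  have fx: "flip i x \<in> cube n" using flip_cube[OF i x(1)] .
  have r: "(1 - e) * u + e * v \<in> {0..1}" "(1 - e) * v + e * u \<in> {0..1}"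
    using noise_bounds[OF e(1) e1 cg x(1)] noise_bounds[OF e(1) e1 cg fx] n1 by auto
  have "u \<le> p" "u \<le> q" unfolding u_v_p_q_def using AA_comp_le[where x=x and i=i and n=n and e=e and g=g] x(2) e(1) e1 by auto
  moreover have "u + v = p + q" unfolding u_v_p_q_def by (rule AA_comp_sum)
  ultimately show ?thesis unfolding n1 using conv_pair[OF cv e _ _ _ r] by blast
qed

lemma J_comp:
  fixes \<Phi> :: "real \<Rightarrow> real"
  assumes i: "i < n" and cv: "convex_on {0..1} \<Phi>" and e: "0 \<le> e" "e \<le> 1/2"
    and g: "\<forall>x\<in>cube n. 0 \<le> g x \<and> g x \<le> 1"
  shows "(\<Sum>x\<in>cube n. \<Phi> (noise n e g x)) \<le> (\<Sum>x\<in>cube n. \<Phi> (noise n e (cmpr i g) x))"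
proof -
  have pw: "\<Phi> (noise n e g x) + \<Phi> (noise n e g (flip i x))
     \<le> \<Phi> (noise n e (cmpr i g) x) + \<Phi> (noise n e (cmpr i g) (flip i x))" if x: "x \<in> cube n" for x
  proof (cases "x i")
    case False then show ?thesis using pointwise[OF i cv e g x] by blast
  next
    case True
    have "flip i x \<in> cube n" "\<not> flip i x i" using flip_cube[OF i x] True by auto
    from pointwise[OF i cv e g this] show ?thesis by (simp add: add.commute)
  qed
  have "2 * (\<Sum>x\<in>cube n. \<Phi> (noise n e g x)) = (\<Sum>x\<in>cube n. \<Phi> (noise n e g x) + \<Phi> (noise n e g (flip i x)))"
    using sum_flip[OF i, of "\<lambda>x. \<Phi> (noise n e g x)"] by (simp add: sum.distrib)
  also have "\<dots> \<le> (\<Sum>x\<in>cube n. \<Phi> (noise n e (cmpr i g) x) + \<Phi> (noise n e (cmpr i g) (flip i x)))"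
    by (rule sum_mono) (rule pw)
  also have "\<dots> = 2 * (\<Sum>x\<in>cube n. \<Phi> (noise n e (cmpr i g) x))"
    using sum_flip[OF i, of "\<lambda>x. \<Phi> (noise n e (cmpr i g) x)"] by (simp add: sum.distrib)
  finally show ?thesis by simp
qed


definition ind :: "(nat \<Rightarrow> bool) set \<Rightarrow> (nat \<Rightarrow> bool) \<Rightarrow> real" where
  "ind S x = (if x \<in> S then 1 else 0)"

definition Cset :: "nat \<Rightarrow> nat \<Rightarrow> (nat \<Rightarrow> bool) set \<Rightarrow> (nat \<Rightarrow> bool) set" where
  "Cset n i S = {x\<in>cube n. if x i then (x \<in> S \<or> flip i x \<in> S) else (x \<in> S \<and> flip i x \<in> S)}"

definition wt :: "nat \<Rightarrow> (nat \<Rightarrow> bool) \<Rightarrow> real" where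
  "wt n x = real (card {j. j < n \<and> x j})"

definition PP :: "nat \<Rightarrow> (nat \<Rightarrow> bool) set \<Rightarrow> real" where
  "PP n S = (\<Sum>x\<in>cube n. ind S x * wt n x)"

lemma noise_cong: "\<forall>x\<in>cube n. f x = g x \<Longrightarrow> y \<in> cube n \<Longrightarrow> noise n e f y = noise n e g y"
  unfolding noise_def by (rule sum.cong) (auto simp: xadd_cube)

lemma cexp_cong: "\<forall>x\<in>cube n. f x = g x \<Longrightarrow> cexp n f = cexp n g"
  unfolding cexp_def by (simp cong: sum.cong)

lemma ind_Cset: "i < n \<Longrightarrow> x \<in> cube n \<Longrightarrow> ind (Cset n i S) x = cmpr i (ind S) x"
  unfolding ind_def Cset_def cmpr_def by auto

lemma sum_ind: "S \<subseteq> cube n \<Longrightarrow> (\<Sum>x\<in>cube n. ind S x) = real (card S)"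
proof -
  assume S: "S \<subseteq> cube n"
  have "(\<Sum>x\<in>cube n. ind S x) = (\<Sum>x\<in>{x\<in>cube n. x \<in> S}. 1)"
    unfolding ind_def by (rule sum.inter_filter[symmetric]) simp
  also have "{x\<in>cube n. x \<in> S} = S" using S by auto
  finally show ?thesis by simp
qed

lemma sum_cmpr: "i < n \<Longrightarrow> (\<Sum>x\<in>cube n. cmpr i g x) = (\<Sum>x\<in>cube n. g x)"
proof -
  assume i: "i < n"
  have "2 * (\<Sum>x\<in>cube n. cmpr i g x) = (\<Sum>x\<in>cube n. cmpr i g x + cmpr i g (flip i x))"
    using sum_flip[OF i, of "cmpr i g"] by (simp add: sum.distrib)
  also have "\<dots> = (\<Sum>x\<in>cube n. g x + g (flip i x))" by (simp add: cmpr_pair)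
  also have "\<dots> = 2 * (\<Sum>x\<in>cube n. g x)"
    using sum_flip[OF i, of g] by (simp add: sum.distrib)
  finally show ?thesis by simp
qed

lemma wt_flip: "i < n \<Longrightarrow> \<not> x i \<Longrightarrow> wt n (flip i x) = wt n x + 1"
proof -
  assume i: "i < n" and x: "\<not> x i"
  have "{j. j < n \<and> flip i x j} = insert i {j. j < n \<and> x j}"
    using i x by (auto simp: flip_def)
  moreover have "i \<notin> {j. j < n \<and> x j}" using x by simp
  ultimately show ?thesis unfolding wt_def by simp
qed

lemma Q_le:
  assumes i: "i < n" and x: "x \<in> cube n" "\<not> x i"
  shows "ind S x * wt n x + ind S (flip i x) * wt n (flip i x)
     \<le> ind (Cset n i S) x * wt n x + ind (Cset n i S) (flip i x) * wt n (flip i x)"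
    and "x \<in> S \<Longrightarrow> flip i x \<notin> S \<Longrightarrow> ind S x * wt n x + ind S (flip i x) * wt n (flip i x)
     < ind (Cset n i S) x * wt n x + ind (Cset n i S) (flip i x) * wt n (flip i x)"
proof -
  have fx: "flip i x \<in> cube n" using flip_cube[OF i x(1)] .
  have w: "wt n (flip i x) = wt n x + 1" using wt_flip[where i=i and n=n and x=x] i x(2) by simp
  show "ind S x * wt n x + ind S (flip i x) * wt n (flip i x)
     \<le> ind (Cset n i S) x * wt n x + ind (Cset n i S) (flip i x) * wt n (flip i x)"
    using x fx unfolding w ind_def Cset_def by (auto simp: algebra_simps)
  show "x \<in> S \<Longrightarrow> flip i x \<notin> S \<Longrightarrow> ind S x * wt n x + ind S (flip i x) * wt n (flip i x)
     < ind (Cset n i S) x * wt n x + ind (Cset n i S) (flip i x) * wt n (flip i x)"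
    using x fx unfolding w ind_def Cset_def by (auto simp: algebra_simps)
qed

lemma PP_strict:
  assumes i: "i < n" and w: "w \<in> cube n" "\<not> w i" "w \<in> S" "flip i w \<notin> S"
  shows "PP n S < PP n (Cset n i S)"
proof -
  let ?Q = "\<lambda>T x. ind T x * wt n x + ind T (flip i x) * wt n (flip i x)"
  have le: "?Q S x \<le> ?Q (Cset n i S) x" if x: "x \<in> cube n" for x
  proof (cases "x i")
    case False then show ?thesis using Q_le(1)[OF i x] by blast
  next
    case True
    have "flip i x \<in> cube n" "\<not> flip i x i" using flip_cube[OF i x] True by auto
    from Q_le(1)[OF i this, of S] show ?thesis by (simp add: add.commute)
  qed
  have "2 * PP n S = (\<Sum>x\<in>cube n. ?Q S x)"
    unfolding PP_def using sum_flip[OF i, of "\<lambda>x. ind S x * wt n x"] by (simp add: sum.distrib)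
  also have "\<dots> < (\<Sum>x\<in>cube n. ?Q (Cset n i S) x)"
    by (rule sum_strict_mono_ex1) (use le Q_le(2)[OF i w(1,2) w(3,4)] w(1) in auto)
  also have "\<dots> = 2 * PP n (Cset n i S)"
    unfolding PP_def using sum_flip[OF i, of "\<lambda>x. ind (Cset n i S) x * wt n x"] by (simp add: sum.distrib)
  finally show ?thesis by simp
qed

lemma edge:
  assumes "card {j. j < n \<and> y j \<and> \<not> x j} = d" "x \<in> cube n" "y \<in> cube n"
    "\<forall>j<n. x j \<longrightarrow> y j" "x \<in> S" "y \<notin> S"
  shows "\<exists>w\<in>cube n. \<exists>i<n. \<not> w i \<and> w \<in> S \<and> flip i w \<notin> S"
  using assms
proof (induction d arbitrary: x)
  case 0
  then have "{j. j < n \<and> y j \<and> \<not> x j} = {}" by simp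
  then have "x = y" using 0 unfolding cube_def by (auto simp: fun_eq_iff) (metis not_le)
  then show ?case using 0 by simp
next
  case (Suc d)
  then obtain i where i: "i < n" "y i" "\<not> x i"
    by (metis (mono_tags, lifting) Collect_empty_eq card.empty nat.distinct(1))
  show ?case
  proof (cases "flip i x \<in> S")
    case False then show ?thesis using Suc.prems i by blast
  next
    case True
    have "{j. j < n \<and> y j \<and> \<not> flip i x j} = {j. j < n \<and> y j \<and> \<not> x j} - {i}"
      using i by (auto simp: flip_def)
    then have "card {j. j < n \<and> y j \<and> \<not> flip i x j} = d"
      using Suc.prems(1) i by (simp add: card_Diff_singleton)
    moreover have "flip i x \<in> cube n" using flip_cube[OF i(1) Suc.prems(2)] .
    moreover have "\<forall>j<n. flip i x j \<longrightarrow> y j" using Suc.prems(4) i by (auto simp: flip_def)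
    ultimately show ?thesis using Suc.IH Suc.prems(3,6) True by blast
  qed
qed

lemma ex_max: "finite A \<Longrightarrow> A \<noteq> {} \<Longrightarrow> \<exists>x\<in>A. \<forall>y\<in>A. (f y :: real) \<le> f x"
proof -
  assume A: "finite A" "A \<noteq> {}"
  then have "Max (f ` A) \<in> f ` A" by (intro Max_in) auto
  then obtain x where x: "x \<in> A" "f x = Max (f ` A)" by auto
  then show ?thesis using A by (metis Max_ge finite_imageI imageI)
qed


theorem theorem2:
  fixes n :: nat and eps m :: real and \<Phi> :: "real \<Rightarrow> real"
  assumes "n \<ge> 1"
    and "0 \<le> eps" and "eps \<le> 1/2"
    and "\<exists>j::nat. j \<le> 2 ^ n \<and> m = real j / 2 ^ n"
    and "convex_on {0..1} \<Phi>"
  shows "\<exists>f. boolean_fun n f \<and> monotone_fun n f \<and> cexp n f = m \<and>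
           (\<forall>g. boolean_fun n g \<and> cexp n g = m \<longrightarrow>
              cexp n (\<lambda>x. \<Phi> (noise n eps f x)) \<ge> cexp n (\<lambda>x. \<Phi> (noise n eps g x)))"
proof -
  obtain j :: nat where j: "j \<le> 2^n" "m = real j / 2^n" using assms(4) by blast
  define W where "W = {S. S \<subseteq> cube n \<and> card S = j}"
  define J where "J S = (\<Sum>x\<in>cube n. \<Phi> (noise n eps (ind S) x))" for S
  have finW: "finite W" by (rule finite_subset[of W "Pow (cube n)"]) (auto simp: W_def)
  have neW: "W \<noteq> {}"
  proof -
    obtain T where "T \<subseteq> cube n" "card T = j"
      using obtain_subset_with_card_n[of j "cube n"] card_cube j(1) by metis
    then show ?thesis unfolding W_def by blast
  qed
  obtain S1 where S1: "S1 \<in> W" "\<forall>T\<in>W. J T \<le> J S1" using ex_max[OF finW neW, of J] by blast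
  define W' where "W' = {T\<in>W. J T = J S1}"
  have finW': "finite W'" using finW unfolding W'_def by simp
  have neW': "W' \<noteq> {}" using S1 unfolding W'_def by blast
  obtain S where S: "S \<in> W'" "\<forall>T\<in>W'. PP n T \<le> PP n S" using ex_max[OF finW' neW', of "PP n"] by blast
  have SW: "S \<subseteq> cube n" "card S = j" "J S = J S1" using S(1) unfolding W'_def W_def by auto
  have bnd: "\<forall>x\<in>cube n. 0 \<le> ind T x \<and> ind T x \<le> 1" for T by (simp add: ind_def)
  have cexpJ: "cexp n (\<lambda>x. \<Phi> (noise n eps g x)) = J T / 2^n" if gT: "\<forall>x\<in>cube n. g x = ind T x" for g T
  proof -
    have "(\<Sum>x\<in>cube n. \<Phi> (noise n eps g x)) = J T"
      unfolding J_def by (rule sum.cong) (simp_all add: noise_cong[OF gT])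
    then show ?thesis by (simp add: cexp_def)
  qed
  have cexp_ind: "cexp n (ind T) = real (card T) / 2^n" if "T \<subseteq> cube n" for T
    using sum_ind[OF that] by (simp add: cexp_def)
  have mono: "monotone_fun n (ind S)"
  proof (rule ccontr)
    assume "\<not> monotone_fun n (ind S)"
    then obtain x y where xy: "x \<in> cube n" "y \<in> cube n" "\<forall>i<n. x i \<longrightarrow> y i" "\<not> ind S x \<le> ind S y"
      unfolding monotone_fun_def by auto
    then have "x \<in> S" "y \<notin> S" by (auto simp: ind_def split: if_splits)
    then obtain w i where w: "w \<in> cube n" "i < n" "\<not> w i" "w \<in> S" "flip i w \<notin> S"
      using edge[OF refl xy(1-3)] by blast
    define C where "C = Cset n i S"
    have Csub: "C \<subseteq> cube n" by (auto simp: C_def Cset_def)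
    have "real (card C) = (\<Sum>x\<in>cube n. ind C x)" using sum_ind[OF Csub] by simp
    also have "\<dots> = (\<Sum>x\<in>cube n. cmpr i (ind S) x)"
      unfolding C_def by (rule sum.cong) (simp_all add: ind_Cset w(2))
    also have "\<dots> = real (card S)" using sum_cmpr[OF w(2)] sum_ind[OF SW(1)] by simp
    finally have "card C = j" using SW by simp
    then have CW: "C \<in> W" using Csub unfolding W_def by simp
    have "J C = (\<Sum>x\<in>cube n. \<Phi> (noise n eps (cmpr i (ind S)) x))"
      unfolding J_def C_def
    proof (rule sum.cong)
      fix x assume "x \<in> cube n"
      moreover have "\<forall>x\<in>cube n. ind (Cset n i S) x = cmpr i (ind S) x" using ind_Cset[OF w(2)] by blast
      ultimately show "\<Phi> (noise n eps (ind (Cset n i S)) x) = \<Phi> (noise n eps (cmpr i (ind S)) x)"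
        using noise_cong by metis
    qed simp
    then have "J S \<le> J C" using J_comp[OF w(2) assms(5) assms(2,3) bnd] unfolding J_def by simp
    then have "J C = J S1" using S1 CW SW by force
    then have "C \<in> W'" using CW unfolding W'_def by simp
    then have "PP n C \<le> PP n S" using S by blast
    moreover have "PP n S < PP n C" using PP_strict[OF w(2) w(1) w(3) w(4) w(5)] C_def by simp
    ultimately show False by simp
  qed
  show ?thesis
  proof (intro exI conjI allI impI)
    show "boolean_fun n (ind S)" by (simp add: boolean_fun_def ind_def)
    show "monotone_fun n (ind S)" by (rule mono)
    show "cexp n (ind S) = m" using cexp_ind[OF SW(1)] SW(2) j by simp
    fix g assume g: "boolean_fun n g \<and> cexp n g = m"
    define T where "T = {x\<in>cube n. g x = 1}"
    have gT: "\<forall>x\<in>cube n. g x = ind T x" using g by (auto simp: boolean_fun_def ind_def T_def)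
    have Tsub: "T \<subseteq> cube n" by (auto simp: T_def)
    have "real (card T) / 2^n = real j / 2^n" using cexp_cong[OF gT] cexp_ind[OF Tsub] g j by simp
    then have "card T = j" by simp
    then have "T \<in> W" using Tsub unfolding W_def by simp
    then have "J T \<le> J S" using S1 SW by simp
    then have "J T / 2^n \<le> J S / 2^n" by (simp add: divide_right_mono)
    then show "cexp n (\<lambda>x. \<Phi> (noise n eps (ind S) x)) \<ge> cexp n (\<lambda>x. \<Phi> (noise n eps g x))"
      using cexpJ[OF gT] cexpJ[of "ind S" S] by simp
  qed
qed

end
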